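(* Fix an attacker label $A\in\mathcal{L}$. For all partial bijections $\beta$, all initial configurations $c_1,c_2$ of $\lambda^{dCG}$ extended with flow-sensitive references (either both of the form $\langle\Sigma,\mu,pc,e\rangle$ evaluated by the forcing semantics or both of the form $\langle\Sigma,\mu,pc,t\rangle$ evaluated by the thunk semantics) and environments $\theta_1,\theta_2$ with $\vdash\mathbf{Valid}(c_1,\theta_1)$, $\vdash\mathbf{Valid}(c_2,\theta_2)$, $c_1\approx^\beta_A c_2$ and $\theta_1\approx^\beta_A\theta_2$: if $c_1\Downarrow^{\theta_1}c_1'$ and $c_2\Downarrow^{\theta_2}c_2'$, then there exists a partial bijection $\beta'\supseteq\beta$ such that $c_1'\approx^{\beta'}_A c_2'$.
   Context: Fix a lattice $(\mathcal{L},\sqsubseteq,\sqcup)$ of labels. The calculus has types $\tau::=\mathbf{unit}\mid\tau_1\to\tau_2\mid\tau_1+\tau_2\mid\tau_1\times\tau_2\mid\mathcal{L}\mid\mathbf{LIO}\,\tau\mid\mathbf{Labeled}\,\tau\mid\mathbf{Ref}\,s\,\tau$, $s\in\{I,S\}$ (standard simple typing; the tag $s$ determines which reference rules apply), values $v::=()\mid(x.e,\theta)\mid\mathbf{inl}(v)\mid\mathbf{inr}(v)\mid(v_1,v_2)\mid\ell\mid\mathbf{Labeled}\,\ell\,v\mid(t,\theta)\mid n_\ell\mid n$ ($n_\ell$ flow-insensitive reference into memory $\ell$, $n$ flow-sensitive heap address), expressions $e::=x\mid\lambda x.e\mid e_1\,e_2\mid()\mid\ell\mid(e_1,e_2)\mid\mathbf{fst}(e)\mid\mathbf{snd}(e)\mid\mathbf{inl}(e)\mid\mathbf{inr}(e)\mid\mathbf{case}(e,x.e_1,x.e_2)\mid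 e_1\sqsubseteq^{?}e_2\mid t$, thunks $t::=\mathbf{return}(e)\mid\mathbf{bind}(e,x.e)\mid\mathbf{unlabel}(e)\mid\mathbf{toLabeled}(e)\mid\mathbf{labelOf}(e)\mid\mathbf{getLabel}\mid\mathbf{taint}(e)\mid\mathbf{new}(e)\mid\,!e\mid e_1:=e_2\mid\mathbf{labelOfRef}(e)$; environments are finite maps from variables to values. Memories are lists of values, a store $\Sigma$ maps each label to a memory, a heap $\mu$ is a list of values of the form $\mathbf{Labeled}\,\ell\,v$; $|X|$, $X[n]$, $X[n\mapsto y]$ denote length, $n$-th entry (from 0), replacement (append if $n=|X|$). Pure semantics $e\Downarrow^\theta v$: $x\Downarrow\theta(x)$; $()\Downarrow()$; $\ell\Downarrow\ell$; $\lambda x.e\Downarrow(x.e,\theta)$; $t\Downarrow(t,\theta)$; $e_1\,e_2\Downarrow v$ if $e_1\Downarrow^\theta(x.e,\theta')$, $e_2\Downarrow^\theta v_2$, $e\Downarrow^{\theta'[x\mapsto v_2]}v$; pairs, projections, injections componentwise; $\mathbf{case}(e,x.e_1,x.e_2)\Downarrow v$ if $e\Downarrow\mathbf{inl}(v_1)$ and $e_1\Downarrow^{\theta[x\mapsto v_1]}v$, or $e\Downarrow\mathbf{inr}(v_2)$ and $e_2\Downarrow^{\theta[x\mapsto v_2]}v$; $e_1\sqsubseteq^?e_2$ evaluates both to labels $\ell_1,\ell_2$ and yields $\mathbf{inl}(())$ if $\ell_1\sqsubseteq\ell_2$, else $\mathbf{inr}(())$. Forcing semantics: $\langle\Sigma,\mu,pc,e\rangle\Downarrow^\theta\langle\Sigma',\mu',pc',v\rangle$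 iff $e\Downarrow^\theta(t,\theta')$ and $\langle\Sigma,\mu,pc,t\rangle\Downarrow^{\theta'}\langle\Sigma',\mu',pc',v\rangle$. Thunk semantics (store/heap unchanged unless stated): (Return) $e\Downarrow^\theta v$ gives $\langle\Sigma,\mu,pc,v\rangle$. (Bind) forcing $e_1$ from $\langle\Sigma,\mu,pc\rangle$ gives $\langle\Sigma',\mu',pc',v_1\rangle$, forcing $e_2$ in $\theta[x\mapsto v_1]$ from $\langle\Sigma',\mu',pc'\rangle$ gives the result. (ToLabeled) forcing $e$ gives $\langle\Sigma',\mu',pc',v\rangle$; result $\langle\Sigma',\mu',pc,\mathbf{Labeled}\,pc'\,v\rangle$. (Unlabel) $e\Downarrow\mathbf{Labeled}\,\ell\,v$; result $\langle\Sigma,\mu,pc\sqcup\ell,v\rangle$. (LabelOf) $e\Downarrow\mathbf{Labeled}\,\ell\,v$; result $\langle\Sigma,\mu,pc\sqcup\ell,\ell\rangle$. (GetLabel) $\langle\Sigma,\mu,pc,pc\rangle$. (Taint) $e\Downarrow\ell$; result $\langle\Sigma,\mu,pc\sqcup\ell,()\rangle$. For $\mathbf{Ref}\,I$: (New) $e\Downarrow\mathbf{Labeled}\,\ell\,v$, $pc\sqsubseteq\ell$, $n=|\Sigma(\ell)|$: result $n_\ell$ with store $\Sigma[\ell\mapsto\Sigma(\ell)[n\mapsto v]]$; (Read) $e\Downarrow n_\ell$, $\Sigma(\ell)[n]=v$: result $\langle\Sigma,\mu,pc\sqcup\ell,v\rangle$; (Write) $e_1\Downarrow n_{\ell_1}$,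 $e_2\Downarrow\mathbf{Labeled}\,\ell_2\,v$, $\ell_2\sqsubseteq\ell_1$, $pc\sqsubseteq\ell_1$: result $()$ with store $\Sigma[\ell_1\mapsto\Sigma(\ell_1)[n\mapsto v]]$; (LabelOfRef) $e\Downarrow n_\ell$: result $\langle\Sigma,\mu,pc\sqcup\ell,\ell\rangle$. For $\mathbf{Ref}\,S$: (New-FS) $e\Downarrow\mathbf{Labeled}\,\ell\,v$, $pc\sqsubseteq\ell$, $n=|\mu|$: result $n$ with heap $\mu[n\mapsto\mathbf{Labeled}\,\ell\,v]$; (Read-FS) $e\Downarrow n$, $\mu[n]=\mathbf{Labeled}\,\ell\,v$: result $\langle\Sigma,\mu,pc\sqcup\ell,v\rangle$; (LabelOfRef-FS) $e\Downarrow n$, $\mu[n]=\mathbf{Labeled}\,\ell\,v$: result $\langle\Sigma,\mu,pc\sqcup\ell,\ell\rangle$; (Write-FS) $e_1\Downarrow n$, $e_2\Downarrow\mathbf{Labeled}\,\ell'\,v$, $\mu[n]=\mathbf{Labeled}\,\ell\,v_0$, $pc\sqsubseteq\ell$: result $()$ with heap $\mu[n\mapsto\mathbf{Labeled}\,(pc\sqcup\ell')\,v]$. Final configurations are $\langle\Sigma,\mu,pc,v\rangle$. A partial bijection is a finite injective partial function $\beta:\mathbb N\rightharpoonup\mathbb N$; $\beta\subseteq\beta'$ is inclusion of graphs. $A$-equivalence up to $\beta$ on values: $\mathbf{Labeled}\,\ell\,v_1\approx^\beta_A\mathbf{Labeled}\,\ell\,v_2$ if $\ell\sqsubseteq A$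 and $v_1\approx^\beta_A v_2$; $\mathbf{Labeled}\,\ell_1\,v_1\approx^\beta_A\mathbf{Labeled}\,\ell_2\,v_2$ if $\ell_1,\ell_2\not\sqsubseteq A$; $()$, labels: equal; injections and pairs homomorphically; function and thunk closures related if bodies are $\alpha$-equivalent and environments are related (same domain, pointwise); $n_\ell\approx n_\ell$ if $\ell\sqsubseteq A$; $(n_1)_{\ell_1}\approx(n_2)_{\ell_2}$ if $\ell_1,\ell_2\not\sqsubseteq A$; heap addresses $n_1\approx^\beta_A n_2$ iff $\beta(n_1)=n_2$. Memories at label $\ell$: always related if $\ell\not\sqsubseteq A$, else same length and pointwise related; stores pointwise. Heaps: $\mu_1\approx^\beta_A\mu_2$ iff $\mathrm{dom}(\beta)\subseteq\{0,\dots,|\mu_1|-1\}$, $\mathrm{rng}(\beta)\subseteq\{0,\dots,|\mu_2|-1\}$, and $\mu_1[n_1]\approx^\beta_A\mu_2[n_2]$ whenever $\beta(n_1)=n_2$. Initial configurations related iff stores and heaps related up to $\beta$, program counters equal, and expressions (resp. thunks) $\alpha$-equivalent. Final configurations $\langle\Sigma_1,\mu_1,pc_1,v_1\rangle\approx^\beta_A\langle\Sigma_2,\mu_2,pc_2,v_2\rangle$ iff stores and heaps are related up to $\beta$ and either $pc_1,pc_2\not\sqsubseteq A$, or $pc_1=pc_2\sqsubseteq A$ and $v_1\approx^\beta_A v_2$. Validity: $n\vdash\mathbf{Valid}(x)$ means every flow-sensitive heap address occurring in $x$ (including inside closures' environments and labeled values) is $<n$. $\vdash\mathbf{Valid}(\langle\Sigma,\mu,pc,e\rangle,\theta)$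 (likewise with a thunk) iff with $n=|\mu|$: $n\vdash\mathbf{Valid}(\Sigma)$, $n\vdash\mathbf{Valid}(\mu)$, $n\vdash\mathbf{Valid}(\theta)$. *)

theory Defs
  imports Main
begin

section \<open>Syntax (de Bruijn indices for variables)\<close>

datatype reftag = RefI | RefS

datatype 'l expr =
    Var nat
  | Lam "'l expr"
  | App "'l expr" "'l expr"
  | EUnit
  | ELbl 'l
  | EPair "'l expr" "'l expr"
  | Fst "'l expr"
  | Snd "'l expr"
  | EInl "'l expr"
  | EInr "'l expr"
  | Case "'l expr" "'l expr" "'l expr"
  | LeqTest "'l expr" "'l expr"
  | Thk "'l thunk"
and 'l thunk =
    Return "'l expr"
  | Bind "'l expr" "'l expr"
  | Unlabel "'l expr"
  | ToLabeled "'l expr"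
  | LabelOf "'l expr"
  | GetLabel
  | Taint "'l expr"
  | New reftag "'l expr"
  | Read "'l expr"
  | Write "'l expr" "'l expr"
  | LabelOfRef "'l expr"

datatype 'l val =
    VUnit
  | VClos "'l expr" "'l val list"
  | VInl "'l val"
  | VInr "'l val"
  | VPair "'l val" "'l val"
  | VLbl 'l
  | VLabeled 'l "'l val"
  | VThunk "'l thunk" "'l val list"
  | VRefI nat 'l     \<comment> \<open>flow-insensitive reference n_l\<close>
  | VRefS nat        \<comment> \<open>flow-sensitive heap address n\<close>

type_synonym 'l env = "'l val list"
type_synonym 'l store = "'l \<Rightarrow> 'l val list"
type_synonym 'l heap = "'l val list"

datatype 'l config =
    CExp "'l store" "'l heap" 'l "'l expr"
  | CThk "'l store" "'l heap" 'l "'l thunk"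

type_synonym 'l final = "'l store \<times> 'l heap \<times> 'l \<times> 'l val"

text \<open>X[n |-> y]: replacement, or append if n = |X| (only used when n <= |X|).\<close>
definition lupd :: "'a list \<Rightarrow> nat \<Rightarrow> 'a \<Rightarrow> 'a list" where
  "lupd X n y = (if n = length X then X @ [y] else X[n := y])"

inductive peval :: "'l::lattice env \<Rightarrow> 'l expr \<Rightarrow> 'l val \<Rightarrow> bool" where
  PVar: "i < length \<theta> \<Longrightarrow> peval \<theta> (Var i) (\<theta> ! i)"
| PUnit: "peval \<theta> EUnit VUnit"
| PLbl: "peval \<theta> (ELbl l) (VLbl l)"
| PLam: "peval \<theta> (Lam e) (VClos e \<theta>)"
| PThk: "peval \<theta> (Thk t) (VThunk t \<theta>)"
| PApp: "peval \<theta> e1 (VClos e \<theta>') \<Longrightarrow> peval \<theta> e2 v2 \<Longrightarrow> peval (v2 # \<theta>') e v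
         \<Longrightarrow> peval \<theta> (App e1 e2) v"
| PPair: "peval \<theta> e1 v1 \<Longrightarrow> peval \<theta> e2 v2 \<Longrightarrow> peval \<theta> (EPair e1 e2) (VPair v1 v2)"
| PFst: "peval \<theta> e (VPair v1 v2) \<Longrightarrow> peval \<theta> (Fst e) v1"
| PSnd: "peval \<theta> e (VPair v1 v2) \<Longrightarrow> peval \<theta> (Snd e) v2"
| PInl: "peval \<theta> e v \<Longrightarrow> peval \<theta> (EInl e) (VInl v)"
| PInr: "peval \<theta> e v \<Longrightarrow> peval \<theta> (EInr e) (VInr v)"
| PCaseL: "peval \<theta> e (VInl v1) \<Longrightarrow> peval (v1 # \<theta>) e1 v \<Longrightarrow> peval \<theta> (Case e e1 e2) v"
| PCaseR: "peval \<theta> e (VInr v2) \<Longrightarrow> peval (v2 # \<theta>) e2 v \<Longrightarrow> peval \<theta> (Case e e1 e2) v"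
| PLeqT: "peval \<theta> e1 (VLbl l1) \<Longrightarrow> peval \<theta> e2 (VLbl l2) \<Longrightarrow> l1 \<le> l2
          \<Longrightarrow> peval \<theta> (LeqTest e1 e2) (VInl VUnit)"
| PLeqF: "peval \<theta> e1 (VLbl l1) \<Longrightarrow> peval \<theta> e2 (VLbl l2) \<Longrightarrow> \<not> l1 \<le> l2
          \<Longrightarrow> peval \<theta> (LeqTest e1 e2) (VInr VUnit)"

inductive
  force :: "'l::lattice store \<Rightarrow> 'l heap \<Rightarrow> 'l \<Rightarrow> 'l expr \<Rightarrow> 'l env \<Rightarrow>
            'l store \<Rightarrow> 'l heap \<Rightarrow> 'l \<Rightarrow> 'l val \<Rightarrow> bool"
and
  teval :: "'l::lattice store \<Rightarrow> 'l heap \<Rightarrow> 'l \<Rightarrow> 'l thunk \<Rightarrow> 'l env \<Rightarrow>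
            'l store \<Rightarrow> 'l heap \<Rightarrow> 'l \<Rightarrow> 'l val \<Rightarrow> bool"
where
  Force: "peval \<theta> e (VThunk t \<theta>') \<Longrightarrow> teval \<Sigma> \<mu> pc t \<theta>' \<Sigma>' \<mu>' pc' v
          \<Longrightarrow> force \<Sigma> \<mu> pc e \<theta> \<Sigma>' \<mu>' pc' v"
| TReturn: "peval \<theta> e v \<Longrightarrow> teval \<Sigma> \<mu> pc (Return e) \<theta> \<Sigma> \<mu> pc v"
| TBind: "force \<Sigma> \<mu> pc e1 \<theta> \<Sigma>' \<mu>' pc' v1 \<Longrightarrow> force \<Sigma>' \<mu>' pc' e2 (v1 # \<theta>) \<Sigma>'' \<mu>'' pc'' v
          \<Longrightarrow> teval \<Sigma> \<mu> pc (Bind e1 e2) \<theta> \<Sigma>'' \<mu>'' pc'' v"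
| TToLabeled: "force \<Sigma> \<mu> pc e \<theta> \<Sigma>' \<mu>' pc' v
          \<Longrightarrow> teval \<Sigma> \<mu> pc (ToLabeled e) \<theta> \<Sigma>' \<mu>' pc (VLabeled pc' v)"
| TUnlabel: "peval \<theta> e (VLabeled l v) \<Longrightarrow> teval \<Sigma> \<mu> pc (Unlabel e) \<theta> \<Sigma> \<mu> (sup pc l) v"
| TLabelOf: "peval \<theta> e (VLabeled l v) \<Longrightarrow> teval \<Sigma> \<mu> pc (LabelOf e) \<theta> \<Sigma> \<mu> (sup pc l) (VLbl l)"
| TGetLabel: "teval \<Sigma> \<mu> pc GetLabel \<theta> \<Sigma> \<mu> pc (VLbl pc)"
| TTaint: "peval \<theta> e (VLbl l) \<Longrightarrow> teval \<Sigma> \<mu> pc (Taint e) \<theta> \<Sigma> \<mu> (sup pc l) VUnit"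
| TNew: "peval \<theta> e (VLabeled l v) \<Longrightarrow> pc \<le> l \<Longrightarrow> n = length (\<Sigma> l)
          \<Longrightarrow> teval \<Sigma> \<mu> pc (New RefI e) \<theta> (\<Sigma>(l := lupd (\<Sigma> l) n v)) \<mu> pc (VRefI n l)"
| TRead: "peval \<theta> e (VRefI n l) \<Longrightarrow> n < length (\<Sigma> l) \<Longrightarrow> \<Sigma> l ! n = v
          \<Longrightarrow> teval \<Sigma> \<mu> pc (Read e) \<theta> \<Sigma> \<mu> (sup pc l) v"
| TWrite: "peval \<theta> e1 (VRefI n l1) \<Longrightarrow> peval \<theta> e2 (VLabeled l2 v) \<Longrightarrow> l2 \<le> l1 \<Longrightarrow> pc \<le> l1
          \<Longrightarrow> n \<le> length (\<Sigma> l1)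
          \<Longrightarrow> teval \<Sigma> \<mu> pc (Write e1 e2) \<theta> (\<Sigma>(l1 := lupd (\<Sigma> l1) n v)) \<mu> pc VUnit"
| TLabelOfRef: "peval \<theta> e (VRefI n l)
          \<Longrightarrow> teval \<Sigma> \<mu> pc (LabelOfRef e) \<theta> \<Sigma> \<mu> (sup pc l) (VLbl l)"
| TNewFS: "peval \<theta> e (VLabeled l v) \<Longrightarrow> pc \<le> l \<Longrightarrow> n = length \<mu>
          \<Longrightarrow> teval \<Sigma> \<mu> pc (New RefS e) \<theta> \<Sigma> (lupd \<mu> n (VLabeled l v)) pc (VRefS n)"
| TReadFS: "peval \<theta> e (VRefS n) \<Longrightarrow> n < length \<mu> \<Longrightarrow> \<mu> ! n = VLabeled l v
          \<Longrightarrow> teval \<Sigma> \<mu> pc (Read e) \<theta> \<Sigma> \<mu> (sup pc l) v"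
| TLabelOfRefFS: "peval \<theta> e (VRefS n) \<Longrightarrow> n < length \<mu> \<Longrightarrow> \<mu> ! n = VLabeled l v
          \<Longrightarrow> teval \<Sigma> \<mu> pc (LabelOfRef e) \<theta> \<Sigma> \<mu> (sup pc l) (VLbl l)"
| TWriteFS: "peval \<theta> e1 (VRefS n) \<Longrightarrow> peval \<theta> e2 (VLabeled l' v) \<Longrightarrow> n < length \<mu>
          \<Longrightarrow> \<mu> ! n = VLabeled l v0 \<Longrightarrow> pc \<le> l
          \<Longrightarrow> teval \<Sigma> \<mu> pc (Write e1 e2) \<theta> \<Sigma> (lupd \<mu> n (VLabeled (sup pc l') v)) pc VUnit"

inductive cfg_eval :: "'l::lattice config \<Rightarrow> 'l env \<Rightarrow> 'l final \<Rightarrow> bool" where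
  "force \<Sigma> \<mu> pc e \<theta> \<Sigma>' \<mu>' pc' v \<Longrightarrow> cfg_eval (CExp \<Sigma> \<mu> pc e) \<theta> (\<Sigma>', \<mu>', pc', v)"
| "teval \<Sigma> \<mu> pc t \<theta> \<Sigma>' \<mu>' pc' v \<Longrightarrow> cfg_eval (CThk \<Sigma> \<mu> pc t) \<theta> (\<Sigma>', \<mu>', pc', v)"

definition pbij :: "(nat \<rightharpoonup> nat) \<Rightarrow> bool" where
  "pbij \<beta> \<longleftrightarrow> finite (dom \<beta>) \<and> inj_on \<beta> (dom \<beta>)"

inductive veq :: "'l::lattice \<Rightarrow> (nat \<rightharpoonup> nat) \<Rightarrow> 'l val \<Rightarrow> 'l val \<Rightarrow> bool"
  for A :: "'l" and \<beta> :: "nat \<rightharpoonup> nat" where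
  EqLabeledLow: "l \<le> A \<Longrightarrow> veq A \<beta> v1 v2 \<Longrightarrow> veq A \<beta> (VLabeled l v1) (VLabeled l v2)"
| EqLabeledHigh: "\<not> l1 \<le> A \<Longrightarrow> \<not> l2 \<le> A \<Longrightarrow> veq A \<beta> (VLabeled l1 v1) (VLabeled l2 v2)"
| EqUnit: "veq A \<beta> VUnit VUnit"
| EqLbl: "veq A \<beta> (VLbl l) (VLbl l)"
| EqInl: "veq A \<beta> v1 v2 \<Longrightarrow> veq A \<beta> (VInl v1) (VInl v2)"
| EqInr: "veq A \<beta> v1 v2 \<Longrightarrow> veq A \<beta> (VInr v1) (VInr v2)"
| EqPair: "veq A \<beta> v1 v2 \<Longrightarrow> veq A \<beta> w1 w2 \<Longrightarrow> veq A \<beta> (VPair v1 w1) (VPair v2 w2)"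
| EqClos: "list_all2 (veq A \<beta>) \<theta>1 \<theta>2 \<Longrightarrow> veq A \<beta> (VClos e \<theta>1) (VClos e \<theta>2)"
| EqThunk: "list_all2 (veq A \<beta>) \<theta>1 \<theta>2 \<Longrightarrow> veq A \<beta> (VThunk t \<theta>1) (VThunk t \<theta>2)"
| EqRefLow: "l \<le> A \<Longrightarrow> veq A \<beta> (VRefI n l) (VRefI n l)"
| EqRefHigh: "\<not> l1 \<le> A \<Longrightarrow> \<not> l2 \<le> A \<Longrightarrow> veq A \<beta> (VRefI n1 l1) (VRefI n2 l2)"
| EqAddr: "\<beta> n1 = Some n2 \<Longrightarrow> veq A \<beta> (VRefS n1) (VRefS n2)"
monos list_all2_mono

definition env_eq :: "'l::lattice \<Rightarrow> (nat \<rightharpoonup> nat) \<Rightarrow> 'l env \<Rightarrow> 'l env \<Rightarrow> bool" where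
  "env_eq A \<beta> \<theta>1 \<theta>2 \<longleftrightarrow> list_all2 (veq A \<beta>) \<theta>1 \<theta>2"

definition mem_eq :: "'l::lattice \<Rightarrow> (nat \<rightharpoonup> nat) \<Rightarrow> 'l \<Rightarrow> 'l val list \<Rightarrow> 'l val list \<Rightarrow> bool" where
  "mem_eq A \<beta> l M1 M2 \<longleftrightarrow> (\<not> l \<le> A \<or> (length M1 = length M2 \<and> list_all2 (veq A \<beta>) M1 M2))"

definition store_eq :: "'l::lattice \<Rightarrow> (nat \<rightharpoonup> nat) \<Rightarrow> 'l store \<Rightarrow> 'l store \<Rightarrow> bool" where
  "store_eq A \<beta> \<Sigma>1 \<Sigma>2 \<longleftrightarrow> (\<forall>l. mem_eq A \<beta> l (\<Sigma>1 l) (\<Sigma>2 l))"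

definition heap_eq :: "'l::lattice \<Rightarrow> (nat \<rightharpoonup> nat) \<Rightarrow> 'l heap \<Rightarrow> 'l heap \<Rightarrow> bool" where
  "heap_eq A \<beta> \<mu>1 \<mu>2 \<longleftrightarrow>
     dom \<beta> \<subseteq> {..<length \<mu>1} \<and> ran \<beta> \<subseteq> {..<length \<mu>2} \<and>
     (\<forall>n1 n2. \<beta> n1 = Some n2 \<longrightarrow> veq A \<beta> (\<mu>1 ! n1) (\<mu>2 ! n2))"

text \<open>Initial configurations: alpha-equivalence is syntactic equality (de Bruijn).\<close>
fun cfg_eq :: "'l::lattice \<Rightarrow> (nat \<rightharpoonup> nat) \<Rightarrow> 'l config \<Rightarrow> 'l config \<Rightarrow> bool" where
  "cfg_eq A \<beta> (CExp \<Sigma>1 \<mu>1 pc1 e1) (CExp \<Sigma>2 \<mu>2 pc2 e2) \<longleftrightarrow>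
     store_eq A \<beta> \<Sigma>1 \<Sigma>2 \<and> heap_eq A \<beta> \<mu>1 \<mu>2 \<and> pc1 = pc2 \<and> e1 = e2"
| "cfg_eq A \<beta> (CThk \<Sigma>1 \<mu>1 pc1 t1) (CThk \<Sigma>2 \<mu>2 pc2 t2) \<longleftrightarrow>
     store_eq A \<beta> \<Sigma>1 \<Sigma>2 \<and> heap_eq A \<beta> \<mu>1 \<mu>2 \<and> pc1 = pc2 \<and> t1 = t2"
| "cfg_eq A \<beta> _ _ \<longleftrightarrow> False"

fun final_eq :: "'l::lattice \<Rightarrow> (nat \<rightharpoonup> nat) \<Rightarrow> 'l final \<Rightarrow> 'l final \<Rightarrow> bool" where
  "final_eq A \<beta> (\<Sigma>1, \<mu>1, pc1, v1) (\<Sigma>2, \<mu>2, pc2, v2) \<longleftrightarrow>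
     store_eq A \<beta> \<Sigma>1 \<Sigma>2 \<and> heap_eq A \<beta> \<mu>1 \<mu>2 \<and>
     ((\<not> pc1 \<le> A \<and> \<not> pc2 \<le> A) \<or> (pc1 = pc2 \<and> pc1 \<le> A \<and> veq A \<beta> v1 v2))"

fun valid_val :: "nat \<Rightarrow> 'l val \<Rightarrow> bool" where
  "valid_val n VUnit = True"
| "valid_val n (VClos e \<theta>) = (\<forall>v\<in>set \<theta>. valid_val n v)"
| "valid_val n (VInl v) = valid_val n v"
| "valid_val n (VInr v) = valid_val n v"
| "valid_val n (VPair v w) = (valid_val n v \<and> valid_val n w)"
| "valid_val n (VLbl l) = True"
| "valid_val n (VLabeled l v) = valid_val n v"
| "valid_val n (VThunk t \<theta>) = (\<forall>v\<in>set \<theta>. valid_val n v)"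
| "valid_val n (VRefI m l) = True"
| "valid_val n (VRefS m) = (m < n)"

definition valid_store :: "nat \<Rightarrow> 'l store \<Rightarrow> bool" where
  "valid_store n \<Sigma> \<longleftrightarrow> (\<forall>l. \<forall>v\<in>set (\<Sigma> l). valid_val n v)"

definition valid_list :: "nat \<Rightarrow> 'l val list \<Rightarrow> bool" where
  "valid_list n xs \<longleftrightarrow> (\<forall>v\<in>set xs. valid_val n v)"

fun valid_cfg :: "'l config \<Rightarrow> 'l env \<Rightarrow> bool" where
  "valid_cfg (CExp \<Sigma> \<mu> pc e) \<theta> \<longleftrightarrow>
     valid_store (length \<mu>) \<Sigma> \<and> valid_list (length \<mu>) \<mu> \<and> valid_list (length \<mu>) \<theta>"
| "valid_cfg (CThk \<Sigma> \<mu> pc t) \<theta> \<longleftrightarrow>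
     valid_store (length \<mu>) \<Sigma> \<and> valid_list (length \<mu>) \<mu> \<and> valid_list (length \<mu>) \<theta>"

end

theory Submission
  imports Defs
begin

lemma veq_mono: "veq A \<beta> v1 v2 \<Longrightarrow> \<beta> \<subseteq>\<^sub>m \<beta>' \<Longrightarrow> veq A \<beta>' v1 v2"
proof (induction rule: veq.induct)
  case (EqClos \<theta>1 \<theta>2 e)
  then show ?case by (auto intro!: veq.EqClos elim: list_all2_mono)
next
  case (EqThunk \<theta>1 \<theta>2 t)
  then show ?case by (auto intro!: veq.EqThunk elim: list_all2_mono)
next
  case (EqAddr n1 n2)
  then show ?case by (auto intro!: veq.EqAddr simp: map_le_def dom_def)
qed (auto intro: veq.intros)

inductive_cases veqLabE: "veq A \<beta> (VLabeled l v) w"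
inductive_cases veqClosE: "veq A \<beta> (VClos e th) w"
inductive_cases veqThkE: "veq A \<beta> (VThunk e th) w"
inductive_cases veqInlE: "veq A \<beta> (VInl v) w"
inductive_cases veqInrE: "veq A \<beta> (VInr v) w"
inductive_cases veqPairE: "veq A \<beta> (VPair v u) w"
inductive_cases veqLblE: "veq A \<beta> (VLbl l) w"
inductive_cases veqRefIE: "veq A \<beta> (VRefI n l) w"
inductive_cases veqRefSE: "veq A \<beta> (VRefS n) w"
inductive_cases veqUnitE: "veq A \<beta> VUnit w"

inductive_cases pVarE: "peval \<theta> (Var i) v"
inductive_cases pUnitE: "peval \<theta> EUnit v"
inductive_cases pLblE: "peval \<theta> (ELbl l) v"
inductive_cases pLamE: "peval \<theta> (Lam e) v"
inductive_cases pThkE: "peval \<theta> (Thk t) v"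
inductive_cases pAppE: "peval \<theta> (App e1 e2) v"
inductive_cases pPairE: "peval \<theta> (EPair e1 e2) v"
inductive_cases pFstE: "peval \<theta> (Fst e) v"
inductive_cases pSndE: "peval \<theta> (Snd e) v"
inductive_cases pInlE: "peval \<theta> (EInl e) v"
inductive_cases pInrE: "peval \<theta> (EInr e) v"
inductive_cases pCaseE: "peval \<theta> (Case e e1 e2) v"
inductive_cases pLeqE: "peval \<theta> (LeqTest e1 e2) v"

lemma pCase_inv: "peval \<theta> (Case e e1 e2) v \<Longrightarrow> (\<exists>w. peval \<theta> e (VInl w) \<and> peval (w#\<theta>) e1 v) \<or> (\<exists>w. peval \<theta> e (VInr w) \<and> peval (w#\<theta>) e2 v)"
  by (auto elim: pCaseE)

lemma peval_eq: "peval \<theta>1 e v1 \<Longrightarrow> peval \<theta>2 e v2 \<Longrightarrow> list_all2 (veq A \<beta>) \<theta>1 \<theta>2 \<Longrightarrow> veq A \<beta> v1 v2"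
proof (induction arbitrary: \<theta>2 v2 rule: peval.induct)
  case (PVar i \<theta>)
  then show ?case by (auto elim!: pVarE simp: list_all2_nthD)
next
  case PUnit then show ?case by (auto elim!: pUnitE intro: veq.intros)
next
  case PLbl then show ?case by (auto elim!: pLblE intro: veq.intros)
next
  case PLam then show ?case by (auto elim!: pLamE intro: veq.intros)
next
  case PThk then show ?case by (auto elim!: pThkE intro: veq.intros)
next
  case (PApp \<theta> e1 e \<theta>' e2 v2' v)
  from PApp.prems(1) obtain e' \<theta>2' w2 where a: "peval \<theta>2 e1 (VClos e' \<theta>2')" "peval \<theta>2 e2 w2" "peval (w2 # \<theta>2') e' v2"
    by (auto elim!: pAppE)
  have "veq A \<beta> (VClos e \<theta>') (VClos e' \<theta>2')" using PApp.IH(1) a(1) PApp.prems(2) by blast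
  then have "e' = e" "list_all2 (veq A \<beta>) \<theta>' \<theta>2'" by (auto elim: veqClosE)
  moreover have "veq A \<beta> v2' w2" using PApp.IH(2) a(2) PApp.prems(2) by blast
  ultimately show ?case using PApp.IH(3) a(3) by auto
next
  case (PPair \<theta> e1 v1 e2 v2)
  then show ?case by (auto elim!: pPairE intro: veq.intros)
next
  case (PFst \<theta> e v1 v2)
  then show ?case by (fastforce elim!: pFstE elim: veqPairE)
next
  case (PSnd \<theta> e v1 v2)
  then show ?case by (fastforce elim!: pSndE elim: veqPairE)
next
  case (PInl \<theta> e v)
  then show ?case by (auto elim!: pInlE intro: veq.intros)
next
  case (PInr \<theta> e v)
  then show ?case by (auto elim!: pInrE intro: veq.intros)
next
  case (PCaseL \<theta> e v1 e1 v e2)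
  from pCase_inv[OF PCaseL.prems(1)] show ?case
  proof (elim disjE exE conjE)
    fix w1 assume a: "peval \<theta>2 e (VInl w1)" "peval (w1 # \<theta>2) e1 v2"
    then have "veq A \<beta> (VInl v1) (VInl w1)" using PCaseL.IH(1) PCaseL.prems(2) by blast
    then have "veq A \<beta> v1 w1" by (auto elim: veqInlE)
    then show ?thesis using PCaseL.IH(2) PCaseL.prems(2) a by auto
  next
    fix w1 assume a: "peval \<theta>2 e (VInr w1)" "peval (w1 # \<theta>2) e2 v2"
    then have "veq A \<beta> (VInl v1) (VInr w1)" using PCaseL.IH(1) PCaseL.prems(2) by blast
    then show ?thesis by (auto elim: veqInlE)
  qed
next
  case (PCaseR \<theta> e v1 e2 v e1)
  from pCase_inv[OF PCaseR.prems(1)] show ?case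
  proof (elim disjE exE conjE)
    fix w1 assume a: "peval \<theta>2 e (VInr w1)" "peval (w1 # \<theta>2) e2 v2"
    then have "veq A \<beta> (VInr v1) (VInr w1)" using PCaseR.IH(1) PCaseR.prems(2) by blast
    then have "veq A \<beta> v1 w1" by (auto elim: veqInrE)
    then show ?thesis using PCaseR.IH(2) PCaseR.prems(2) a by auto
  next
    fix w1 assume a: "peval \<theta>2 e (VInl w1)" "peval (w1 # \<theta>2) e1 v2"
    then have "veq A \<beta> (VInr v1) (VInl w1)" using PCaseR.IH(1) PCaseR.prems(2) by blast
    then show ?thesis by (auto elim: veqInrE)
  qed
next
  case (PLeqT \<theta> e1 l1 e2 l2)
  from PLeqT.prems(1) show ?case
    apply (cases rule: pLeqE)
    using PLeqT by (fastforce elim: veqLblE intro: veq.intros)+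
next
  case (PLeqF \<theta> e1 l1 e2 l2)
  from PLeqF.prems(1) show ?case
    apply (cases rule: pLeqE)
    using PLeqF by (fastforce elim: veqLblE intro: veq.intros)+
qed

lemma pc_mono:
  shows "force \<Sigma> \<mu> pc e \<theta> \<Sigma>' \<mu>' pc' v \<Longrightarrow> pc \<le> pc'"
    and "teval \<Sigma> \<mu> pc t \<theta> \<Sigma>' \<mu>' pc' v \<Longrightarrow> pc \<le> pc'"
  by (induction rule: force_teval.inducts) auto

definition lowsame :: "'l::lattice \<Rightarrow> 'l store \<Rightarrow> 'l store \<Rightarrow> bool" where
  "lowsame A S S' \<longleftrightarrow> (\<forall>l. l \<le> A \<longrightarrow> S' l = S l)"

definition hconf :: "'l::lattice \<Rightarrow> 'l heap \<Rightarrow> 'l heap \<Rightarrow> bool" where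
  "hconf A m m' \<longleftrightarrow> length m \<le> length m' \<and> (\<forall>n<length m. m'!n = m!n \<or>
     (\<exists>l v l' v'. m!n = VLabeled l v \<and> \<not> l \<le> A \<and> m'!n = VLabeled l' v' \<and> \<not> l' \<le> A))"

lemma hconf_refl: "hconf A m m" by (simp add: hconf_def)
lemma lowsame_refl: "lowsame A m m" by (simp add: lowsame_def)
lemma lowsame_trans: "lowsame A a b \<Longrightarrow> lowsame A b c \<Longrightarrow> lowsame A a c" by (simp add: lowsame_def)
lemma hconf_trans: "hconf A a b \<Longrightarrow> hconf A b c \<Longrightarrow> hconf A a c"
proof -
  assume ab: "hconf A a b" and bc: "hconf A b c"
  have "length a \<le> length c" using ab bc by (simp add: hconf_def)
  moreover have "c!n = a!n \<or> (\<exists>l v l' v'. a!n = VLabeled l v \<and> \<not> l \<le> A \<and> c!n = VLabeled l' v' \<and> \<not> l' \<le> A)"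
    if n: "n < length a" for n
  proof -
    have nb: "n < length b" using n ab by (simp add: hconf_def)
    have 1: "b!n = a!n \<or> (\<exists>l v l' v'. a!n = VLabeled l v \<and> \<not> l \<le> A \<and> b!n = VLabeled l' v' \<and> \<not> l' \<le> A)"
      using ab n by (simp add: hconf_def)
    have 2: "c!n = b!n \<or> (\<exists>l v l' v'. b!n = VLabeled l v \<and> \<not> l \<le> A \<and> c!n = VLabeled l' v' \<and> \<not> l' \<le> A)"
      using bc nb by (simp add: hconf_def)
    from 1 2 show ?thesis by (elim disjE exE conjE; simp)
  qed
  ultimately show ?thesis by (simp add: hconf_def)
qed

lemma lupd_len: "lupd X (length X) y = X @ [y]" by (simp add: lupd_def)
lemma lupd_lt: "n < length X \<Longrightarrow> lupd X n y = X[n := y]" by (simp add: lupd_def)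

lemma confine:
  shows "force \<Sigma> \<mu> pc e \<theta> \<Sigma>' \<mu>' pc' v \<Longrightarrow> \<not> pc \<le> A \<Longrightarrow> lowsame A \<Sigma> \<Sigma>' \<and> hconf A \<mu> \<mu>'"
    and "teval \<Sigma> \<mu> pc t \<theta> \<Sigma>' \<mu>' pc' v \<Longrightarrow> \<not> pc \<le> A \<Longrightarrow> lowsame A \<Sigma> \<Sigma>' \<and> hconf A \<mu> \<mu>'"
proof (induction rule: force_teval.inducts)
  case (TBind \<Sigma> \<mu> pc e1 \<theta> \<Sigma>' \<mu>' pc' v1 e2 \<Sigma>'' \<mu>'' pc'' v)
  have "\<not> pc' \<le> A" using pc_mono(1)[OF TBind.hyps(1)] TBind.prems order_trans by blast
  then show ?case using TBind lowsame_trans hconf_trans by blast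
next
  case (TNew \<theta> e l v pc n \<Sigma> \<mu>)
  then have "\<not> l \<le> A" using order_trans by blast
  then show ?case by (auto simp: lowsame_def hconf_refl)
next
  case (TWrite \<theta> e1 n l1 e2 l2 v pc \<Sigma> \<mu>)
  then have "\<not> l1 \<le> A" using order_trans by blast
  then show ?case by (auto simp: lowsame_def hconf_refl)
next
  case (TNewFS \<theta> e l v pc n \<mu> \<Sigma>)
  then show ?case by (auto simp: lowsame_refl hconf_def lupd_len nth_append)
next
  case (TWriteFS \<theta> e1 n e2 l' v \<mu> l v0 pc \<Sigma>)
  then have "\<not> l \<le> A" using order_trans by blast
  moreover have "\<not> sup pc l' \<le> A" using TWriteFS.prems by simp
  ultimately show ?case using TWriteFS.hyps by (auto simp: lowsame_refl hconf_def lupd_lt nth_list_update)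
qed (auto simp: lowsame_refl hconf_refl)

lemma store_eq_conf: "store_eq A \<beta> S1 S2 \<Longrightarrow> lowsame A S1 S1' \<Longrightarrow> lowsame A S2 S2' \<Longrightarrow> store_eq A \<beta> S1' S2'"
  by (auto simp: store_eq_def lowsame_def mem_eq_def)

lemma heap_eq_conf:
  assumes h: "heap_eq A \<beta> m1 m2" and c1: "hconf A m1 m1'" and c2: "hconf A m2 m2'"
  shows "heap_eq A \<beta> m1' m2'"
proof -
  have d: "dom \<beta> \<subseteq> {..<length m1}" "ran \<beta> \<subseteq> {..<length m2}" using h by (auto simp: heap_eq_def)
  have "veq A \<beta> (m1' ! n1) (m2' ! n2)" if b: "\<beta> n1 = Some n2" for n1 n2
  proof -
    have n1: "n1 < length m1" using d b by (auto simp: dom_def)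
    have n2: "n2 < length m2" using d b by (auto simp: ran_def)
    have r: "veq A \<beta> (m1 ! n1) (m2 ! n2)" using h b by (auto simp: heap_eq_def)
    have 1: "m1'!n1 = m1!n1 \<or> (\<exists>l v l' v'. m1!n1 = VLabeled l v \<and> \<not> l \<le> A \<and> m1'!n1 = VLabeled l' v' \<and> \<not> l' \<le> A)"
      using c1 n1 by (simp add: hconf_def)
    have 2: "m2'!n2 = m2!n2 \<or> (\<exists>l v l' v'. m2!n2 = VLabeled l v \<and> \<not> l \<le> A \<and> m2'!n2 = VLabeled l' v' \<and> \<not> l' \<le> A)"
      using c2 n2 by (simp add: hconf_def)
    show ?thesis
    proof (cases "m1'!n1 = m1!n1 \<and> m2'!n2 = m2!n2")
      case True then show ?thesis using r by simp
    next
      case False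
      then have "\<exists>l v. m1!n1 = VLabeled l v \<and> \<not> l \<le> A \<or> m2!n2 = VLabeled l v \<and> \<not> l \<le> A" using 1 2 by blast
      then have hh: "(\<exists>l v. m1!n1 = VLabeled l v \<and> \<not> l \<le> A) \<and> (\<exists>l v. m2!n2 = VLabeled l v \<and> \<not> l \<le> A)"
        using r by (auto elim: veqLabE veq.cases)
      then show ?thesis using 1 2 by (auto intro: veq.EqLabeledHigh)
    qed
  qed
  moreover have "dom \<beta> \<subseteq> {..<length m1'}" "ran \<beta> \<subseteq> {..<length m2'}"
    using d c1 c2 by (auto simp: hconf_def)
  ultimately show ?thesis by (simp add: heap_eq_def)
qed

lemma high_run:
  assumes "\<not> pc \<le> A" "\<not> pc' \<le> A" "store_eq A \<beta> S1 S2" "heap_eq A \<beta> m1 m2"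
    and r1: "force S1 m1 pc e th1 S1' m1' pc1 v1" and r2: "force S2 m2 pc' e' th2 S2' m2' pc2 v2"
  shows "final_eq A \<beta> (S1', m1', pc1, v1) (S2', m2', pc2, v2)"
proof -
  have "\<not> pc1 \<le> A" "\<not> pc2 \<le> A" using pc_mono(1)[OF r1] pc_mono(1)[OF r2] assms(1,2) order_trans by blast+
  moreover have "store_eq A \<beta> S1' S2'" "heap_eq A \<beta> m1' m2'"
    using confine(1)[OF r1 assms(1)] confine(1)[OF r2 assms(2)] assms(3,4) store_eq_conf heap_eq_conf by blast+
  ultimately show ?thesis by simp
qed

lemma high_run_t:
  assumes "\<not> pc \<le> A" "store_eq A \<beta> S1 S2" "heap_eq A \<beta> m1 m2"
    and r1: "teval S1 m1 pc e th1 S1' m1' pc1 v1" and r2: "teval S2 m2 pc e' th2 S2' m2' pc2 v2"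
  shows "final_eq A \<beta> (S1', m1', pc1, v1) (S2', m2', pc2, v2)"
proof -
  have "\<not> pc1 \<le> A" "\<not> pc2 \<le> A" using pc_mono(2)[OF r1] pc_mono(2)[OF r2] assms(1) order_trans by blast+
  moreover have "store_eq A \<beta> S1' S2'" "heap_eq A \<beta> m1' m2'"
    using confine(2)[OF r1 assms(1)] confine(2)[OF r2 assms(1)] assms(2,3) store_eq_conf heap_eq_conf by blast+
  ultimately show ?thesis by simp
qed

inductive_cases forceE: "force S m pc e th S' m' pc' v"
inductive_cases tReturnE: "teval S m pc (Return e) th S' m' pc' v"
inductive_cases tBindE: "teval S m pc (Bind e1 e2) th S' m' pc' v"
inductive_cases tUnlabelE: "teval S m pc (Unlabel e) th S' m' pc' v"
inductive_cases tToLabeledE: "teval S m pc (ToLabeled e) th S' m' pc' v"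
inductive_cases tLabelOfE: "teval S m pc (LabelOf e) th S' m' pc' v"
inductive_cases tGetLabelE: "teval S m pc GetLabel th S' m' pc' v"
inductive_cases tTaintE: "teval S m pc (Taint e) th S' m' pc' v"
inductive_cases tNewE: "teval S m pc (New s e) th S' m' pc' v"
inductive_cases tReadE: "teval S m pc (Read e) th S' m' pc' v"
inductive_cases tWriteE: "teval S m pc (Write e1 e2) th S' m' pc' v"
inductive_cases tLabelOfRefE: "teval S m pc (LabelOfRef e) th S' m' pc' v"

lemma inv_force: "force S m pc e th S' m' pc' v \<Longrightarrow> \<exists>t th'. peval th e (VThunk t th') \<and> teval S m pc t th' S' m' pc' v"
  by (erule forceE) blast
lemma inv_Return: "teval S m pc (Return e) th S' m' pc' v \<Longrightarrow> S' = S \<and> m' = m \<and> pc' = pc \<and> peval th e v"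
  by (erule tReturnE; force)
lemma inv_Bind: "teval S m pc (Bind e1 e2) th S'' m'' pc'' v \<Longrightarrow> \<exists>S' m' pc' v1. force S m pc e1 th S' m' pc' v1 \<and> force S' m' pc' e2 (v1 # th) S'' m'' pc'' v"
  by (erule tBindE) blast
lemma inv_ToLabeled: "teval S m pc (ToLabeled e) th S' m' pc'' v \<Longrightarrow> \<exists>pc' w. pc'' = pc \<and> v = VLabeled pc' w \<and> force S m pc e th S' m' pc' w"
  by (erule tToLabeledE; force)
lemma inv_Unlabel: "teval S m pc (Unlabel e) th S' m' pc' v \<Longrightarrow> \<exists>l. S' = S \<and> m' = m \<and> pc' = sup pc l \<and> peval th e (VLabeled l v)"
  by (erule tUnlabelE; force)
lemma inv_LabelOf: "teval S m pc (LabelOf e) th S' m' pc' v \<Longrightarrow> \<exists>l w. S' = S \<and> m' = m \<and> pc' = sup pc l \<and> v = VLbl l \<and> peval th e (VLabeled l w)"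
  by (erule tLabelOfE; force)
lemma inv_GetLabel: "teval S m pc GetLabel th S' m' pc' v \<Longrightarrow> S' = S \<and> m' = m \<and> pc' = pc \<and> v = VLbl pc"
  by (erule tGetLabelE; force)
lemma inv_Taint: "teval S m pc (Taint e) th S' m' pc' v \<Longrightarrow> \<exists>l. S' = S \<and> m' = m \<and> pc' = sup pc l \<and> v = VUnit \<and> peval th e (VLbl l)"
  by (erule tTaintE; force)
lemma inv_NewI: "teval S m pc (New RefI e) th S' m' pc' v \<Longrightarrow> \<exists>l w. peval th e (VLabeled l w) \<and> pc \<le> l \<and> S' = S(l := lupd (S l) (length (S l)) w) \<and> m' = m \<and> pc' = pc \<and> v = VRefI (length (S l)) l"
  by (erule tNewE; force)
lemma inv_NewS: "teval S m pc (New RefS e) th S' m' pc' v \<Longrightarrow> \<exists>l w. peval th e (VLabeled l w) \<and> pc \<le> l \<and> S' = S \<and> m' = lupd m (length m) (VLabeled l w) \<and> pc' = pc \<and> v = VRefS (length m)"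
  by (erule tNewE; force)
lemma inv_Read: "teval S m pc (Read e) th S' m' pc' v \<Longrightarrow> S' = S \<and> m' = m \<and>
   ((\<exists>n l. peval th e (VRefI n l) \<and> n < length (S l) \<and> v = S l ! n \<and> pc' = sup pc l) \<or>
    (\<exists>n l. peval th e (VRefS n) \<and> n < length m \<and> m ! n = VLabeled l v \<and> pc' = sup pc l))"
  by (erule tReadE; force)
lemma inv_LabelOfRef: "teval S m pc (LabelOfRef e) th S' m' pc' v \<Longrightarrow> S' = S \<and> m' = m \<and>
   ((\<exists>n l. peval th e (VRefI n l) \<and> v = VLbl l \<and> pc' = sup pc l) \<or>
    (\<exists>n l w. peval th e (VRefS n) \<and> n < length m \<and> m ! n = VLabeled l w \<and> v = VLbl l \<and> pc' = sup pc l))"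
  by (erule tLabelOfRefE; force)
lemma inv_Write: "teval S m pc (Write e1 e2) th S' m' pc' v \<Longrightarrow> pc' = pc \<and> v = VUnit \<and>
   ((\<exists>n l1 l2 w. peval th e1 (VRefI n l1) \<and> peval th e2 (VLabeled l2 w) \<and> l2 \<le> l1 \<and> pc \<le> l1 \<and>
       n \<le> length (S l1) \<and> S' = S(l1 := lupd (S l1) n w) \<and> m' = m) \<or>
    (\<exists>n l' w l w0. peval th e1 (VRefS n) \<and> peval th e2 (VLabeled l' w) \<and> n < length m \<and>
       m ! n = VLabeled l w0 \<and> pc \<le> l \<and> S' = S \<and> m' = lupd m n (VLabeled (sup pc l') w)))"
  by (erule tWriteE; force)

lemma env_eq_mono: "list_all2 (veq A \<beta>) a b \<Longrightarrow> \<beta> \<subseteq>\<^sub>m \<beta>' \<Longrightarrow> list_all2 (veq A \<beta>') a b"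
  by (auto elim: list_all2_mono intro: veq_mono)
lemma store_eq_mono: "store_eq A \<beta> a b \<Longrightarrow> \<beta> \<subseteq>\<^sub>m \<beta>' \<Longrightarrow> store_eq A \<beta>' a b"
  by (auto simp: store_eq_def mem_eq_def intro: env_eq_mono)

lemma lupd_rel: "list_all2 P X Y \<Longrightarrow> P x y \<Longrightarrow> n \<le> length X \<Longrightarrow> list_all2 P (lupd X n x) (lupd Y n y)"
  by (auto simp: lupd_def list_all2_lengthD list_all2_appendI intro: list_all2_update_cong)

lemma store_upd_high1: "store_eq A \<beta> S1 S2 \<Longrightarrow> \<not> l \<le> A \<Longrightarrow> store_eq A \<beta> (S1(l := X)) S2"
  by (auto simp: store_eq_def mem_eq_def)
lemma store_upd_high2: "store_eq A \<beta> S1 S2 \<Longrightarrow> \<not> l \<le> A \<Longrightarrow> store_eq A \<beta> S1 (S2(l := X))"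
  by (auto simp: store_eq_def mem_eq_def)
lemma store_upd_low: "store_eq A \<beta> S1 S2 \<Longrightarrow> list_all2 (veq A \<beta>) X Y \<Longrightarrow> store_eq A \<beta> (S1(l := X)) (S2(l := Y))"
  by (auto simp: store_eq_def mem_eq_def list_all2_lengthD)

lemma alloc_step:
  assumes p: "pbij \<beta>" and h: "heap_eq A \<beta> m1 m2" and r: "veq A \<beta> x y"
  shows "pbij (\<beta>(length m1 \<mapsto> length m2)) \<and> \<beta> \<subseteq>\<^sub>m \<beta>(length m1 \<mapsto> length m2) \<and>
         heap_eq A (\<beta>(length m1 \<mapsto> length m2)) (m1 @ [x]) (m2 @ [y])"
proof -
  let ?b = "\<beta>(length m1 \<mapsto> length m2)"
  have d: "dom \<beta> \<subseteq> {..<length m1}" "ran \<beta> \<subseteq> {..<length m2}" using h by (auto simp: heap_eq_def)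
  have n1: "\<beta> (length m1) = None" using d by auto
  have n2: "\<beta> a \<noteq> Some (length m2)" for a using d by (auto simp: ran_def)
  have le: "\<beta> \<subseteq>\<^sub>m ?b" using n1 by (auto simp: map_le_def)
  have pb: "pbij ?b"
  proof -
    have "finite (dom ?b)" using p by (simp add: pbij_def)
    moreover have "inj_on ?b (dom ?b)" using p n2 unfolding pbij_def inj_on_def by (auto simp: dom_def)
    ultimately show ?thesis by (simp add: pbij_def)
  qed
  have "veq A ?b ((m1 @ [x]) ! a) ((m2 @ [y]) ! b)" if ab: "?b a = Some b" for a b
  proof (cases "a = length m1")
    case True
    then show ?thesis using ab r veq_mono[OF _ le] by auto
  next
    case False
    then have ab': "\<beta> a = Some b" using ab by auto
    then have "a < length m1" "b < length m2" using d by (auto simp: dom_def ran_def)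
    moreover have "veq A \<beta> (m1 ! a) (m2 ! b)" using h ab' by (auto simp: heap_eq_def)
    ultimately show ?thesis using veq_mono[OF _ le] by (auto simp: nth_append)
  qed
  moreover have "dom ?b \<subseteq> {..<length (m1 @ [x])}" using d by auto
  moreover have "ran ?b \<subseteq> {..<length (m2 @ [y])}" using d by (auto simp: ran_def)
  ultimately show ?thesis using pb le by (simp add: heap_eq_def)
qed

lemma write_step:
  assumes p: "pbij \<beta>" and h: "heap_eq A \<beta> m1 m2" and b: "\<beta> n1 = Some n2" and r: "veq A \<beta> x y"
  shows "heap_eq A \<beta> (m1[n1 := x]) (m2[n2 := y])"
proof -
  have "veq A \<beta> ((m1[n1 := x]) ! a) ((m2[n2 := y]) ! c)" if ab: "\<beta> a = Some c" for a c
  proof -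
    have "a = n1 \<longleftrightarrow> c = n2" using p b ab unfolding pbij_def inj_on_def by (auto simp: dom_def)
    moreover have "a < length m1" "c < length m2" using h ab by (auto simp: heap_eq_def dom_def ran_def)
    moreover have "veq A \<beta> (m1 ! a) (m2 ! c)" using h ab by (auto simp: heap_eq_def)
    ultimately show ?thesis using r by (cases "a = n1") auto
  qed
  then show ?thesis using h by (simp add: heap_eq_def)
qed

lemma lab_final:
  assumes "veq A \<beta> (VLabeled l v) (VLabeled l2 v2)" "store_eq A \<beta> S1 S2" "heap_eq A \<beta> m1 m2" "pc \<le> A"
  shows "final_eq A \<beta> (S1, m1, sup pc l, v) (S2, m2, sup pc l2, v2)"
    and "final_eq A \<beta> (S1, m1, sup pc l, VLbl l) (S2, m2, sup pc l2, VLbl l2)"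
  using assms by (auto elim!: veqLabE intro: veq.intros)

lemma low_run:
  shows "force S1 m1 pc e th1 S1' m1' pc1 v1 \<Longrightarrow> pc \<le> A \<Longrightarrow> pbij \<beta> \<Longrightarrow> store_eq A \<beta> S1 S2 \<Longrightarrow> heap_eq A \<beta> m1 m2 \<Longrightarrow> env_eq A \<beta> th1 th2
     \<Longrightarrow> force S2 m2 pc e th2 S2' m2' pc2 v2 \<Longrightarrow> \<exists>\<beta>'. pbij \<beta>' \<and> \<beta> \<subseteq>\<^sub>m \<beta>' \<and> final_eq A \<beta>' (S1', m1', pc1, v1) (S2', m2', pc2, v2)"
    and "teval S1 m1 pc t th1 S1' m1' pc1 v1 \<Longrightarrow> pc \<le> A \<Longrightarrow> pbij \<beta> \<Longrightarrow> store_eq A \<beta> S1 S2 \<Longrightarrow> heap_eq A \<beta> m1 m2 \<Longrightarrow> env_eq A \<beta> th1 th2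
     \<Longrightarrow> teval S2 m2 pc t th2 S2' m2' pc2 v2 \<Longrightarrow> \<exists>\<beta>'. pbij \<beta>' \<and> \<beta> \<subseteq>\<^sub>m \<beta>' \<and> final_eq A \<beta>' (S1', m1', pc1, v1) (S2', m2', pc2, v2)"
proof (induction arbitrary: \<beta> S2 m2 th2 S2' m2' pc2 v2 and \<beta> S2 m2 th2 S2' m2' pc2 v2 rule: force_teval.inducts)
  case (Force th e t th' S m pc S' m' pc' v)
  obtain t2 th2' where a: "peval th2 e (VThunk t2 th2')" "teval S2 m2 pc t2 th2' S2' m2' pc2 v2"
    using inv_force[OF Force.prems(6)] by blast
  have "veq A \<beta> (VThunk t th') (VThunk t2 th2')"
    using peval_eq[OF Force.hyps(1) a(1)] Force.prems(5) by (simp add: env_eq_def)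
  then have "t2 = t" "env_eq A \<beta> th' th2'" by (auto elim: veqThkE simp: env_eq_def)
  then show ?case using Force.IH Force.prems(1-4) a(2) by blast
next
  case (TReturn th e v S m pc)
  have a: "S2' = S2" "m2' = m2" "pc2 = pc" "peval th2 e v2" using inv_Return[OF TReturn.prems(6)] by auto
  have "veq A \<beta> v v2" using peval_eq[OF TReturn.hyps a(4)] TReturn.prems(5) by (simp add: env_eq_def)
  then show ?case using a TReturn.prems by (intro exI[of _ \<beta>]) auto
next
  case (TBind S m pc e1 th S' m' pc' v1 e2 S'' m'' pc'' v)
  obtain Sa ma pca w1 where a: "force S2 m2 pc e1 th2 Sa ma pca w1" "force Sa ma pca e2 (w1 # th2) S2' m2' pc2 v2"
    using inv_Bind[OF TBind.prems(6)] by blast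
  obtain \<beta>1 where b1: "pbij \<beta>1" "\<beta> \<subseteq>\<^sub>m \<beta>1" "final_eq A \<beta>1 (S', m', pc', v1) (Sa, ma, pca, w1)"
    using TBind.IH(1) TBind.prems(1-5) a(1) by blast
  hence st: "store_eq A \<beta>1 S' Sa" "heap_eq A \<beta>1 m' ma" by simp_all
  show ?case
  proof (cases "pc' \<le> A")
    case False
    then have "\<not> pca \<le> A" using b1(3) by auto
    then have "final_eq A \<beta>1 (S'', m'', pc'', v) (S2', m2', pc2, v2)"
      using high_run[OF False _ st TBind.hyps(2) a(2)] by blast
    then show ?thesis using b1 by blast
  next
    case True
    then have e: "pca = pc'" "veq A \<beta>1 v1 w1" using b1(3) by auto
    then have env: "env_eq A \<beta>1 (v1 # th) (w1 # th2)" using TBind.prems(5) b1(2) env_eq_mono by (auto simp: env_eq_def)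
    obtain \<beta>2 where "pbij \<beta>2" "\<beta>1 \<subseteq>\<^sub>m \<beta>2" "final_eq A \<beta>2 (S'', m'', pc'', v) (S2', m2', pc2, v2)"
      using TBind.IH(2)[OF True b1(1) st env] a(2) e(1) by blast
    then show ?thesis using b1(2) map_le_trans by blast
  qed
next
  case (TToLabeled S m pc e th S' m' pc' v)
  obtain pca w where a: "pc2 = pc" "v2 = VLabeled pca w" "force S2 m2 pc e th2 S2' m2' pca w"
    using inv_ToLabeled[OF TToLabeled.prems(6)] by blast
  obtain \<beta>1 where b: "pbij \<beta>1" "\<beta> \<subseteq>\<^sub>m \<beta>1" "final_eq A \<beta>1 (S', m', pc', v) (S2', m2', pca, w)"
    using TToLabeled.IH TToLabeled.prems(1-5) a(3) by blast
  have "veq A \<beta>1 (VLabeled pc' v) (VLabeled pca w)" using b(3) by (auto intro: veq.intros)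
  then show ?case using b a TToLabeled.prems(1) by auto
next
  case (TUnlabel th e l v S m pc)
  obtain l2 where a: "S2' = S2" "m2' = m2" "pc2 = sup pc l2" "peval th2 e (VLabeled l2 v2)"
    using inv_Unlabel[OF TUnlabel.prems(6)] by blast
  have "veq A \<beta> (VLabeled l v) (VLabeled l2 v2)" using peval_eq[OF TUnlabel.hyps a(4)] TUnlabel.prems(5) by (simp add: env_eq_def)
  from lab_final(1)[OF this TUnlabel.prems(3,4,1)] show ?case using a TUnlabel.prems by (intro exI[of _ \<beta>]) auto
next
  case (TLabelOf th e l v S m pc)
  obtain l2 w where a: "S2' = S2" "m2' = m2" "pc2 = sup pc l2" "v2 = VLbl l2" "peval th2 e (VLabeled l2 w)"
    using inv_LabelOf[OF TLabelOf.prems(6)] by blast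
  have "veq A \<beta> (VLabeled l v) (VLabeled l2 w)" using peval_eq[OF TLabelOf.hyps a(5)] TLabelOf.prems(5) by (simp add: env_eq_def)
  from lab_final(2)[OF this TLabelOf.prems(3,4,1)] show ?case using a TLabelOf.prems by (intro exI[of _ \<beta>]) auto
next
  case (TGetLabel S m pc th)
  then show ?case using inv_GetLabel[OF TGetLabel.prems(6)] by (intro exI[of _ \<beta>]) (auto intro: veq.intros)
next
  case (TTaint th e l S m pc)
  obtain l2 where a: "S2' = S2" "m2' = m2" "pc2 = sup pc l2" "v2 = VUnit" "peval th2 e (VLbl l2)"
    using inv_Taint[OF TTaint.prems(6)] by blast
  have "veq A \<beta> (VLbl l) (VLbl l2)" using peval_eq[OF TTaint.hyps a(5)] TTaint.prems(5) by (simp add: env_eq_def)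
  then show ?case using a TTaint.prems by (intro exI[of _ \<beta>]) (auto elim!: veqLblE intro: veq.intros)
next
  case (TNew th e l v pc n S m)
  obtain l2 w where a: "peval th2 e (VLabeled l2 w)" "pc \<le> l2" "S2' = S2(l2 := lupd (S2 l2) (length (S2 l2)) w)"
     "m2' = m2" "pc2 = pc" "v2 = VRefI (length (S2 l2)) l2"
    using inv_NewI[OF TNew.prems(6)] by blast
  have r: "veq A \<beta> (VLabeled l v) (VLabeled l2 w)" using peval_eq[OF TNew.hyps(1) a(1)] TNew.prems(5) by (simp add: env_eq_def)
  show ?case
  proof (cases "l \<le> A")
    case True
    then have e: "l2 = l" "veq A \<beta> v w" using r by (auto elim: veqLabE)
    have la: "list_all2 (veq A \<beta>) (S l) (S2 l)" using TNew.prems(3) True by (auto simp: store_eq_def mem_eq_def)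
    then have len: "length (S2 l) = length (S l)" by (simp add: list_all2_lengthD)
    have st: "store_eq A \<beta> (S(l := lupd (S l) n v)) S2'"
      using a(3) e len store_upd_low[OF TNew.prems(3) lupd_rel[OF la e(2), of n], of l] TNew.hyps(3) by simp
    have "final_eq A \<beta> (S(l := lupd (S l) n v), m, pc, VRefI n l) (S2', m2', pc2, v2)"
      using st a e len TNew.hyps TNew.prems True by (simp add: veq.EqRefLow)
    then show ?thesis using TNew.prems(2) map_le_refl by blast
  next
    case False
    then have h2: "\<not> l2 \<le> A" using r by (auto elim: veqLabE)
    have st: "store_eq A \<beta> (S(l := lupd (S l) n v)) S2'"
      using a(3) store_upd_high1[OF store_upd_high2[OF TNew.prems(3) h2] False] by simp
    have "final_eq A \<beta> (S(l := lupd (S l) n v), m, pc, VRefI n l) (S2', m2', pc2, v2)"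
      using st a False h2 TNew.hyps TNew.prems by (simp add: veq.EqRefHigh)
    then show ?thesis using TNew.prems(2) map_le_refl by blast
  qed
next
  case (TRead th e n l S v m pc)
  have a: "S2' = S2" "m2' = m2" using inv_Read[OF TRead.prems(6)] by auto
  from inv_Read[OF TRead.prems(6)] show ?case
  proof (elim conjE disjE exE)
    fix n2 l2 assume b: "peval th2 e (VRefI n2 l2)" "n2 < length (S2 l2)" "v2 = S2 l2 ! n2" "pc2 = sup pc l2"
    have r: "veq A \<beta> (VRefI n l) (VRefI n2 l2)" using peval_eq[OF TRead.hyps(1) b(1)] TRead.prems(5) by (simp add: env_eq_def)
    show ?thesis
    proof (cases "l \<le> A")
      case True
      then have e: "n2 = n" "l2 = l" using r by (auto elim: veqRefIE)
      have la: "list_all2 (veq A \<beta>) (S l) (S2 l)" using TRead.prems(3) True by (auto simp: store_eq_def mem_eq_def)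
      then have "veq A \<beta> v v2" using TRead.hyps b(3) e list_all2_nthD[OF la TRead.hyps(2)] by simp
      then show ?thesis using a b e TRead.prems by (intro exI[of _ \<beta>]) auto
    next
      case False
      then have "\<not> l2 \<le> A" using r by (auto elim: veqRefIE)
      then show ?thesis using a b False TRead.prems by (intro exI[of _ \<beta>]) auto
    qed
  next
    fix n2 l2 assume b: "peval th2 e (VRefS n2)"
    have "veq A \<beta> (VRefI n l) (VRefS n2)" using peval_eq[OF TRead.hyps(1) b(1)] TRead.prems(5) by (simp add: env_eq_def)
    then show ?thesis by (auto elim: veqRefIE)
  qed
next
  case (TWrite th e1 n l1 e2 l2 v pc S m)
  from inv_Write[OF TWrite.prems(6)] show ?case
  proof (elim conjE disjE exE)
    fix n' l1' l2' w assume b: "pc2 = pc" "v2 = VUnit" "peval th2 e1 (VRefI n' l1')" "peval th2 e2 (VLabeled l2' w)"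
      "l2' \<le> l1'" "pc \<le> l1'" "n' \<le> length (S2 l1')" "S2' = S2(l1' := lupd (S2 l1') n' w)" "m2' = m2"
    have r1: "veq A \<beta> (VRefI n l1) (VRefI n' l1')" using peval_eq[OF TWrite.hyps(1) b(3)] TWrite.prems(5) by (simp add: env_eq_def)
    have r2: "veq A \<beta> (VLabeled l2 v) (VLabeled l2' w)" using peval_eq[OF TWrite.hyps(2) b(4)] TWrite.prems(5) by (simp add: env_eq_def)
    have st: "store_eq A \<beta> (S(l1 := lupd (S l1) n v)) S2'"
    proof (cases "l1 \<le> A")
      case True
      then have e: "n' = n" "l1' = l1" using r1 by (auto elim: veqRefIE)
      have "l2 \<le> A" using True TWrite.hyps(3) order_trans by blast
      then have e2: "l2' = l2" "veq A \<beta> v w" using r2 by (auto elim: veqLabE)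
      have la: "list_all2 (veq A \<beta>) (S l1) (S2 l1)" using TWrite.prems(3) True by (auto simp: store_eq_def mem_eq_def)
      show ?thesis using b(8) e store_upd_low[OF TWrite.prems(3) lupd_rel[OF la e2(2) TWrite.hyps(5)]] by simp
    next
      case False
      then have h2: "\<not> l1' \<le> A" using r1 by (auto elim: veqRefIE)
      show ?thesis using b(8) store_upd_high1[OF store_upd_high2[OF TWrite.prems(3) h2] False] by simp
    qed
    then have "final_eq A \<beta> (S(l1 := lupd (S l1) n v), m, pc, VUnit) (S2', m2', pc2, v2)"
      using b TWrite.prems(1,4) by (simp add: veq.EqUnit)
    then show ?thesis using TWrite.prems(2) map_le_refl by blast
  next
    fix n2 assume b: "peval th2 e1 (VRefS n2)"
    have "veq A \<beta> (VRefI n l1) (VRefS n2)" using peval_eq[OF TWrite.hyps(1) b(1)] TWrite.prems(5) by (simp add: env_eq_def)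
    then show ?thesis by (auto elim: veqRefIE)
  qed
next
  case (TLabelOfRef th e n l S m pc)
  have a: "S2' = S2" "m2' = m2" using inv_LabelOfRef[OF TLabelOfRef.prems(6)] by auto
  from inv_LabelOfRef[OF TLabelOfRef.prems(6)] show ?case
  proof (elim conjE disjE exE)
    fix n2 l2 assume b: "peval th2 e (VRefI n2 l2)" "v2 = VLbl l2" "pc2 = sup pc l2"
    have r: "veq A \<beta> (VRefI n l) (VRefI n2 l2)" using peval_eq[OF TLabelOfRef.hyps(1) b(1)] TLabelOfRef.prems(5) by (simp add: env_eq_def)
    show ?thesis
    proof (cases "l \<le> A")
      case True
      then have e: "n2 = n" "l2 = l" using r by (auto elim: veqRefIE)
      then show ?thesis using a b e TLabelOfRef.prems by (intro exI[of _ \<beta>]) (auto intro: veq.intros)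
    next
      case False
      then have "\<not> l2 \<le> A" using r by (auto elim: veqRefIE)
      then show ?thesis using a b False TLabelOfRef.prems by (intro exI[of _ \<beta>]) auto
    qed
  next
    fix n2 l2 assume b: "peval th2 e (VRefS n2)"
    have "veq A \<beta> (VRefI n l) (VRefS n2)" using peval_eq[OF TLabelOfRef.hyps(1) b(1)] TLabelOfRef.prems(5) by (simp add: env_eq_def)
    then show ?thesis by (auto elim: veqRefIE)
  qed
next
  case (TNewFS th e l v pc n m S)
  obtain l2 w where a: "peval th2 e (VLabeled l2 w)" "pc \<le> l2" "S2' = S2"
     "m2' = lupd m2 (length m2) (VLabeled l2 w)" "pc2 = pc" "v2 = VRefS (length m2)"
    using inv_NewS[OF TNewFS.prems(6)] by blast
  have r: "veq A \<beta> (VLabeled l v) (VLabeled l2 w)" using peval_eq[OF TNewFS.hyps(1) a(1)] TNewFS.prems(5) by (simp add: env_eq_def)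
  define bb where "bb = \<beta>(length m \<mapsto> length m2)"
  have al: "pbij bb" "\<beta> \<subseteq>\<^sub>m bb" "heap_eq A bb (m @ [VLabeled l v]) (m2 @ [VLabeled l2 w])"
    using alloc_step[OF TNewFS.prems(2,4) r] unfolding bb_def by auto
  have "store_eq A bb S S2" using store_eq_mono[OF TNewFS.prems(3) al(2)] .
  moreover have "veq A bb (VRefS (length m)) (VRefS (length m2))" unfolding bb_def by (auto intro: veq.intros)
  ultimately have "final_eq A bb (S, lupd m n (VLabeled l v), pc, VRefS n) (S2', m2', pc2, v2)"
    using al a TNewFS.hyps TNewFS.prems(1) by (simp add: lupd_len)
  then show ?case using al by blast
next
  case (TReadFS th e n m l v S pc)
  have a: "S2' = S2" "m2' = m2" using inv_Read[OF TReadFS.prems(6)] by auto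
  from inv_Read[OF TReadFS.prems(6)] show ?case
  proof (elim conjE disjE exE)
    fix n2 l2 assume b: "peval th2 e (VRefI n2 l2)"
    have "veq A \<beta> (VRefS n) (VRefI n2 l2)" using peval_eq[OF TReadFS.hyps(1) b(1)] TReadFS.prems(5) by (simp add: env_eq_def)
    then show ?thesis by (auto elim: veqRefSE)
  next
    fix n2 l2 assume b: "peval th2 e (VRefS n2)" "n2 < length m2" "m2 ! n2 = VLabeled l2 v2" "pc2 = sup pc l2"
    have "veq A \<beta> (VRefS n) (VRefS n2)" using peval_eq[OF TReadFS.hyps(1) b(1)] TReadFS.prems(5) by (simp add: env_eq_def)
    then have "\<beta> n = Some n2" by (auto elim: veqRefSE)
    then have "veq A \<beta> (m ! n) (m2 ! n2)" using TReadFS.prems(4) unfolding heap_eq_def by blast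
    then have "veq A \<beta> (VLabeled l v) (VLabeled l2 v2)" using TReadFS.hyps(3) b(3) by simp
    from lab_final(1)[OF this TReadFS.prems(3,4,1)] show ?thesis using a b TReadFS.prems by (intro exI[of _ \<beta>]) auto
  qed
next
  case (TLabelOfRefFS th e n m l v S pc)
  have a: "S2' = S2" "m2' = m2" using inv_LabelOfRef[OF TLabelOfRefFS.prems(6)] by auto
  from inv_LabelOfRef[OF TLabelOfRefFS.prems(6)] show ?case
  proof (elim conjE disjE exE)
    fix n2 l2 assume b: "peval th2 e (VRefI n2 l2)"
    have "veq A \<beta> (VRefS n) (VRefI n2 l2)" using peval_eq[OF TLabelOfRefFS.hyps(1) b(1)] TLabelOfRefFS.prems(5) by (simp add: env_eq_def)
    then show ?thesis by (auto elim: veqRefSE)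
  next
    fix n2 l2 w assume b: "peval th2 e (VRefS n2)" "n2 < length m2" "m2 ! n2 = VLabeled l2 w" "v2 = VLbl l2" "pc2 = sup pc l2"
    have "veq A \<beta> (VRefS n) (VRefS n2)" using peval_eq[OF TLabelOfRefFS.hyps(1) b(1)] TLabelOfRefFS.prems(5) by (simp add: env_eq_def)
    then have "\<beta> n = Some n2" by (auto elim: veqRefSE)
    then have "veq A \<beta> (m ! n) (m2 ! n2)" using TLabelOfRefFS.prems(4) unfolding heap_eq_def by blast
    then have "veq A \<beta> (VLabeled l v) (VLabeled l2 w)" using TLabelOfRefFS.hyps(3) b(3) by simp
    from lab_final(2)[OF this TLabelOfRefFS.prems(3,4,1)] show ?thesis using a b TLabelOfRefFS.prems by (intro exI[of _ \<beta>]) auto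
  qed
next
  case (TWriteFS th e1 n e2 l' v m l v0 pc S)
  from inv_Write[OF TWriteFS.prems(6)] show ?case
  proof (elim conjE disjE exE)
    fix n' l1' l2' w assume b: "peval th2 e1 (VRefI n' l1')"
    have "veq A \<beta> (VRefS n) (VRefI n' l1')" using peval_eq[OF TWriteFS.hyps(1) b(1)] TWriteFS.prems(5) by (simp add: env_eq_def)
    then show ?thesis by (auto elim: veqRefSE)
  next
    fix n2 l2' w lb w0 assume b: "pc2 = pc" "v2 = VUnit" "peval th2 e1 (VRefS n2)" "peval th2 e2 (VLabeled l2' w)"
      "n2 < length m2" "m2 ! n2 = VLabeled lb w0" "pc \<le> lb" "S2' = S2" "m2' = lupd m2 n2 (VLabeled (sup pc l2') w)"
    have "veq A \<beta> (VRefS n) (VRefS n2)" using peval_eq[OF TWriteFS.hyps(1) b(3)] TWriteFS.prems(5) by (simp add: env_eq_def)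
    then have bn: "\<beta> n = Some n2" by (auto elim: veqRefSE)
    have r2: "veq A \<beta> (VLabeled l' v) (VLabeled l2' w)" using peval_eq[OF TWriteFS.hyps(2) b(4)] TWriteFS.prems(5) by (simp add: env_eq_def)
    have "veq A \<beta> (VLabeled (sup pc l') v) (VLabeled (sup pc l2') w)"
      using r2 TWriteFS.prems(1) by (auto elim!: veqLabE intro: veq.intros)
    then have "heap_eq A \<beta> (m[n := VLabeled (sup pc l') v]) (m2[n2 := VLabeled (sup pc l2') w])"
      using write_step[OF TWriteFS.prems(2,4) bn] by blast
    then show ?thesis using b TWriteFS.prems TWriteFS.hyps(3) by (intro exI[of _ \<beta>]) (auto simp: lupd_lt intro: veq.intros)
  qed
qed

lemma ni_force:
  assumes "pbij \<beta>" "store_eq A \<beta> S1 S2" "heap_eq A \<beta> m1 m2" "env_eq A \<beta> th1 th2"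
    "force S1 m1 pc e th1 S1' m1' pc1 v1" "force S2 m2 pc e th2 S2' m2' pc2 v2"
  shows "\<exists>\<beta>'. pbij \<beta>' \<and> \<beta> \<subseteq>\<^sub>m \<beta>' \<and> final_eq A \<beta>' (S1', m1', pc1, v1) (S2', m2', pc2, v2)"
proof (cases "pc \<le> A")
  case True
  show ?thesis using low_run(1)[OF assms(5) True assms(1-4,6)] by blast
next
  case False
  then show ?thesis using high_run[OF False False assms(2,3,5,6)] assms(1) map_le_refl by blast
qed

lemma ni_teval:
  assumes "pbij \<beta>" "store_eq A \<beta> S1 S2" "heap_eq A \<beta> m1 m2" "env_eq A \<beta> th1 th2"
    "teval S1 m1 pc t th1 S1' m1' pc1 v1" "teval S2 m2 pc t th2 S2' m2' pc2 v2"
  shows "\<exists>\<beta>'. pbij \<beta>' \<and> \<beta> \<subseteq>\<^sub>m \<beta>' \<and> final_eq A \<beta>' (S1', m1', pc1, v1) (S2', m2', pc2, v2)"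
proof (cases "pc \<le> A")
  case True
  show ?thesis using low_run(2)[OF assms(5) True assms(1-4,6)] by blast
next
  case False
  then show ?thesis using high_run_t[OF False assms(2,3,5,6)] assms(1) map_le_refl by blast
qed

theorem mainTheorem4:
  fixes A :: "'l::lattice"
    and \<beta> :: "nat \<rightharpoonup> nat"
    and c1 c2 :: "'l config"
    and \<theta>1 \<theta>2 :: "'l env"
    and f1 f2 :: "'l final"
  assumes "pbij \<beta>"
    and "valid_cfg c1 \<theta>1" and "valid_cfg c2 \<theta>2"
    and "cfg_eq A \<beta> c1 c2"
    and "env_eq A \<beta> \<theta>1 \<theta>2"
    and "cfg_eval c1 \<theta>1 f1" and "cfg_eval c2 \<theta>2 f2"
  shows "\<exists>\<beta>'. pbij \<beta>' \<and> \<beta> \<subseteq>\<^sub>m \<beta>' \<and> final_eq A \<beta>' f1 f2"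
  using assms(6)
proof (cases rule: cfg_eval.cases)
  case (1 S m pc e S' m' pc' v)
  from assms(7) show ?thesis
  proof (cases rule: cfg_eval.cases)
    case (1 S2 m2 pc2 e2 S2' m2' pc2' v2)
    then show ?thesis using ni_force[of \<beta> A S S2 m m2 \<theta>1 \<theta>2 pc e S' m' pc' v S2' m2' pc2' v2] assms(1,4,5) `c1 = _` `f1 = _` `force S m pc e \<theta>1 S' m' pc' v` by auto
  next
    case (2 S2 m2 pc2 t2 S2' m2' pc2' v2)
    then show ?thesis using assms(4) `c1 = _` by simp
  qed
next
  case (2 S m pc t S' m' pc' v)
  from assms(7) show ?thesis
  proof (cases rule: cfg_eval.cases)
    case (1 S2 m2 pc2 e2 S2' m2' pc2' v2)
    then show ?thesis using assms(4) `c1 = _` by simp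
  next
    case (2 S2 m2 pc2 t2 S2' m2' pc2' v2)
    then show ?thesis using ni_teval[of \<beta> A S S2 m m2 \<theta>1 \<theta>2 pc t S' m' pc' v S2' m2' pc2' v2] assms(1,4,5) `c1 = _` `f1 = _` `teval S m pc t \<theta>1 S' m' pc' v` by auto
  qed
qed

end
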